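(* Let $r>\frac12$ and let $y(s,r)=s+\mathop{K}_{n=1}^{\infty}\left(\dfrac{(2n-1)^2r^2-(r-1)^2}{2s}\right)$ for $s>0$; this is a positive continuous function with $y(s,r)>s$ and $y(s,r)\,y(s+2r,r)=(s+1)(s+2r-1)$ for $s>0$. Then the functional equation $$f(s,r)+f(s+2r,r)=\frac{1}{s+1}+\frac{1}{s+2r-1}=\frac{2(s+r)}{(s+1)(s+2r-1)}\qquad(s>0)$$ has a unique solution satisfying $\lim_{s\to\infty}f(s,r)=0$, and this solution is $f(s,r)=\frac{\partial}{\partial s}(\ln y)(s,r)$.
   Context: $\mathop{K}_{n=1}^{\infty}\left(\frac{a_n}{b}\right)$ denotes the continued fraction $\cfrac{a_1}{b+\cfrac{a_2}{b+\cdots}}$ (limit of convergents). *)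

theory Defs
  imports "HOL-Analysis.Analysis"
begin

fun cf_tail :: "(nat \<Rightarrow> real) \<Rightarrow> real \<Rightarrow> nat \<Rightarrow> nat \<Rightarrow> real" where
  "cf_tail a b 0 k = 0"
| "cf_tail a b (Suc m) k = a k / (b + cf_tail a b m (Suc k))"

definition cf_convergent :: "(nat \<Rightarrow> real) \<Rightarrow> real \<Rightarrow> nat \<Rightarrow> real" where
  "cf_convergent a b N = cf_tail a b N 1"

definition cfrac :: "(nat \<Rightarrow> real) \<Rightarrow> real \<Rightarrow> real" where
  "cfrac a b = lim (cf_convergent a b)"

definition cf_num :: "real \<Rightarrow> nat \<Rightarrow> real" where
  "cf_num r n = (2 * real n - 1)^2 * r^2 - (r - 1)^2"

definition y_cf :: "real \<Rightarrow> real \<Rightarrow> real" where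
  "y_cf s r = s + cfrac (cf_num r) (2 * s)"

end

theory Submission
  imports Defs
begin


fun cA :: "(nat \<Rightarrow> real) \<Rightarrow> real \<Rightarrow> nat \<Rightarrow> real" where
  "cA a b 0 = 1"
| "cA a b (Suc 0) = 0"
| "cA a b (Suc (Suc n)) = b * cA a b (Suc n) + a (Suc n) * cA a b n"

fun cB :: "(nat \<Rightarrow> real) \<Rightarrow> real \<Rightarrow> nat \<Rightarrow> real" where
  "cB a b 0 = 0"
| "cB a b (Suc 0) = 1"
| "cB a b (Suc (Suc n)) = b * cB a b (Suc n) + a (Suc n) * cB a b n"

fun ctw :: "(nat \<Rightarrow> real) \<Rightarrow> real \<Rightarrow> real \<Rightarrow> nat \<Rightarrow> nat \<Rightarrow> real" where
  "ctw a b w 0 k = w"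
| "ctw a b w (Suc m) k = a k / (b + ctw a b w m (Suc k))"

lemma cf_tail_ctw: "cf_tail a b m k = ctw a b 0 m k"
  by (induction m arbitrary: k) auto

lemma ctw_snoc: "ctw a b w (Suc m) k = ctw a b (a (k+m) / (b+w)) m k"
  by (induction m arbitrary: k) auto

lemma ctw_formula:
  assumes b: "b > 0" and a: "\<And>k. a k > 0" and w: "w \<ge> 0"
  shows "ctw a b w n 1 = (cA a b (Suc n) + w * cA a b n) / (cB a b (Suc n) + w * cB a b n)"
  using w
proof (induction n arbitrary: w)
  case 0
  then show ?case by simp
next
  case (Suc n)
  define t where "t = a (Suc n) / (b + w)"
  have bw: "b + w > 0" using b Suc.prems by linarith
  have t0: "t \<ge> 0" using a[of "Suc n"] bw by (simp add: t_def)
  have "ctw a b w (Suc n) 1 = ctw a b t n 1" using ctw_snoc[of a b w n 1] by (simp add: t_def)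
  also have "\<dots> = (cA a b (Suc n) + t * cA a b n) / (cB a b (Suc n) + t * cB a b n)"
    using Suc.IH[OF t0] .
  also have "\<dots> = ((b+w) * (cA a b (Suc n) + t * cA a b n)) / ((b+w) * (cB a b (Suc n) + t * cB a b n))"
    using bw by simp
  also have "(b+w) * (cA a b (Suc n) + t * cA a b n) = cA a b (Suc (Suc n)) + w * cA a b (Suc n)"
    using bw by (simp add: t_def field_simps)
  also have "(b+w) * (cB a b (Suc n) + t * cB a b n) = cB a b (Suc (Suc n)) + w * cB a b (Suc n)"
    using bw by (simp add: t_def field_simps)
  finally show ?case .
qed

lemma cf_convergent_AB:
  assumes b: "b > 0" and a: "\<And>k. a k > 0"
  shows "cf_convergent a b n = cA a b (Suc n) / cB a b (Suc n)"
  using ctw_formula[OF b a, of 0] by (simp add: cf_convergent_def cf_tail_ctw)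

lemma cB_pos:
  assumes b: "b > 0" and a: "\<And>k. a k > 0"
  shows "cB a b (Suc n) > 0 \<and> cB a b n \<ge> 0"
proof (induction n)
  case 0 then show ?case by simp
next
  case (Suc n)
  then show ?case using b a[of "Suc n"]
    by (simp add: add_pos_nonneg)
qed

lemma cA_nonneg:
  assumes b: "b > 0" and a: "\<And>k. a k > 0"
  shows "cA a b (Suc n) \<ge> 0 \<and> cA a b n \<ge> 0"
proof (induction n)
  case 0 then show ?case by simp
next
  case (Suc n)
  then show ?case using b a[of "Suc n"] by simp
qed

definition Pa :: "(nat \<Rightarrow> real) \<Rightarrow> nat \<Rightarrow> real" where
  "Pa a n = (\<Prod>k<n. a (Suc k))"

lemma Pa_pos: "(\<And>k. a k > 0) \<Longrightarrow> Pa a n > 0"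
  unfolding Pa_def by (intro prod_pos) auto

lemma cf_det: "cA a b n * cB a b (Suc n) - cA a b (Suc n) * cB a b n = (-1)^n * Pa a n"
proof (induction n)
  case 0 then show ?case by (simp add: Pa_def)
next
  case (Suc n)
  have "cA a b (Suc n) * cB a b (Suc (Suc n)) - cA a b (Suc (Suc n)) * cB a b (Suc n)
      = - a (Suc n) * (cA a b n * cB a b (Suc n) - cA a b (Suc n) * cB a b n)"
    by (simp add: algebra_simps)
  then show ?case using Suc by (simp add: Pa_def)
qed



definition cQ :: "(nat \<Rightarrow> real) \<Rightarrow> real \<Rightarrow> nat \<Rightarrow> real" where
  "cQ a b n = cB a b (Suc n) * cB a b n / Pa a n"

lemma harm_mult_Suc: "(c::real) * harm (Suc K) = c * harm K + c / real (Suc K)"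
  by (simp add: harm_Suc distrib_left divide_inverse)

locale cfpos =
  fixes a :: "nat \<Rightarrow> real" and b :: real
  assumes b: "b > 0" and a: "\<And>k. a k > 0"
begin

abbreviation "Q \<equiv> cQ a b"
abbreviation "B \<equiv> cB a b"
abbreviation "A \<equiv> cA a b"

lemma Bpos: "B (Suc n) > 0" and Bnn: "B n \<ge> 0"
  using cB_pos[OF b a] by auto

lemma Pa_Suc: "Pa a (Suc n) = Pa a n * a (Suc n)"
  by (simp add: Pa_def)

lemma Q_Suc: "Q (Suc n) = Q n + b * B (Suc n)^2 / Pa a (Suc n)"
proof -
  have P: "Pa a n > 0" using Pa_pos a by blast
  have an: "a (Suc n) > 0" using a by blast
  show ?thesis unfolding cQ_def Pa_Suc using P an
    by (simp add: field_simps power2_eq_square)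
qed

lemma Q_0: "Q 0 = 0" by (simp add: cQ_def)

lemma Q_strict: "Q n < Q (Suc n)"
proof -
  have B1: "B (Suc n) > 0" by (rule Bpos)
  have "b * B (Suc n)^2 / Pa a (Suc n) > 0"
    using b B1 Pa_pos[of a "Suc n"] a by (intro divide_pos_pos mult_pos_pos) (auto simp del: cB.simps)
  then show ?thesis using Q_Suc by simp
qed

lemma Q_mono: "m \<le> n \<Longrightarrow> Q m \<le> Q n"
  by (induction n rule: dec_induct) (auto intro: order.trans less_imp_le[OF Q_strict])

lemma Q_pos: "Q (Suc n) > 0"
  using Q_mono[of 0 n] Q_strict[of n] Q_0 by simp

lemma conv_diff: "cf_convergent a b (Suc n) - cf_convergent a b n = (-1)^n / Q (Suc n)"
proof -
  have d: "A (Suc n) * B (Suc (Suc n)) - A (Suc (Suc n)) * B (Suc n) = (-1)^(Suc n) * Pa a (Suc n)"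
    by (rule cf_det)
  have B1: "B (Suc n) > 0" by (rule Bpos)
  have B2: "B (Suc (Suc n)) > 0" by (rule Bpos)
  have P: "Pa a (Suc n) > 0" using Pa_pos a by blast
  have "cf_convergent a b (Suc n) - cf_convergent a b n
      = (A (Suc (Suc n)) * B (Suc n) - A (Suc n) * B (Suc (Suc n))) / (B (Suc (Suc n)) * B (Suc n))"
    using B1 B2 by (simp add: cf_convergent_AB[OF b a] field_simps)
  also have "\<dots> = (-1)^n * Pa a (Suc n) / (B (Suc (Suc n)) * B (Suc n))"
    using d by (simp add: algebra_simps)
  also have "\<dots> = (-1)^n / Q (Suc n)"
    using P B1 B2 by (simp add: cQ_def field_simps)
  finally show ?thesis .
qed

lemma conv_sum: "cf_convergent a b n = (\<Sum>i<n. (-1)^i * (1 / Q (Suc i)))"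
proof (induction n)
  case 0 then show ?case by (simp add: cf_convergent_def)
next
  case (Suc n)
  then show ?case using conv_diff[of n] by simp
qed

theorem conv_criterion:
  assumes Qlim: "filterlim Q at_top sequentially"
  shows "convergent (cf_convergent a b)" "cfrac a b > 0"
proof -
  define c where "c i = 1 / Q (Suc i)" for i
  have QS: "filterlim (\<lambda>i. Q (Suc i)) at_top sequentially"
    using filterlim_compose[OF Qlim filterlim_Suc] by (simp add: o_def)
  have c0: "c \<longlonglongrightarrow> 0"
    unfolding c_def using tendsto_inverse_0_at_top[OF QS] by (simp add: inverse_eq_divide)
  have cnn: "\<And>n. 0 \<le> c n" using Q_pos by (simp add: c_def less_imp_le)
  have cmono: "\<And>n. c (Suc n) \<le> c n"
    unfolding c_def using Q_pos Q_strict by (simp add: frac_le less_imp_le)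
  note L = summable_Leibniz'[OF c0 cnn cmono]
  have eq: "cf_convergent a b = (\<lambda>n. \<Sum>i<n. (-1)^i * c i)"
    using conv_sum by (simp add: c_def fun_eq_iff)
  have lim: "cf_convergent a b \<longlonglongrightarrow> (\<Sum>i. (-1)^i * c i)"
    unfolding eq using summable_LIMSEQ[OF L(1)] .
  then show "convergent (cf_convergent a b)" by (auto simp: convergent_def)
  have "cfrac a b = (\<Sum>i. (-1)^i * c i)" unfolding cfrac_def using lim by (rule limI)
  moreover have "(\<Sum>i<2*1. (-1)^i * c i) \<le> (\<Sum>i. (-1)^i * c i)" using L(2) .
  moreover have "c 1 < c 0"
    unfolding c_def using Q_pos[of 0] Q_strict[of 1] by (simp add: frac_less2)
  ultimately show "cfrac a b > 0" by (simp add: numeral_2_eq_2)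
qed

lemma conv_lim:
  assumes Qlim: "filterlim Q at_top sequentially"
  shows "cf_convergent a b \<longlonglongrightarrow> cfrac a b"
  using conv_criterion(1)[OF Qlim] by (simp add: cfrac_def convergent_LIMSEQ_iff)

theorem Q_diverge:
  assumes ratio: "\<And>k. a (2*k+3) * (2*k+1) \<le> a (2*k+2) * (2*k+3)"
  shows "filterlim Q at_top sequentially"
proof -
  define g where "g k = B (2*k+1)^2 / Pa a (2*k+1)" for k
  have a1: "a 1 > 0" using a by blast
  have g_low: "g k \<ge> 1 / (a 1 * (2*k+1))" for k
  proof (induction k)
    case 0 then show ?case by (simp add: g_def Pa_def)
  next
    case (Suc k)
    have a2: "a (2*k+2) > 0" and a3: "a (2*k+3) > 0" using a by auto
    have P: "Pa a (2*k+1) > 0" using Pa_pos a by blast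
    have Pe: "Pa a (2*Suc k+1) = Pa a (2*k+1) * a (2*k+2) * a (2*k+3)"
      by (simp add: Pa_def numeral_3_eq_3 numeral_2_eq_2 mult.assoc)
    have Be: "B (2*Suc k+1) = b * B (2*k+2) + a (2*k+2) * B (2*k+1)"
      by (simp add: numeral_3_eq_3 numeral_2_eq_2)
    have Bge: "B (2*Suc k+1) \<ge> a (2*k+2) * B (2*k+1)"
      using Be b Bnn[of "2*k+2"] by (simp add: add_increasing)
    have B1: "B (2*k+1) \<ge> 0" using Bnn by blast
    have n1: "2 * real k + 1 \<noteq> 0" and n3: "2*real k + 3 \<noteq> 0" by linarith+
    have "1 / (a 1 * (2*real (Suc k)+1)) = 1 / (a 1 * (2*k+1)) * ((2*k+1) / (2*k+3))"
      using a1 n1 n3 by (simp add: divide_simps)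
    also have "\<dots> \<le> g k * (a (2*k+2) / a (2*k+3))"
    proof (rule mult_mono)
      show "(2*k+1) / (2*k+3) \<le> a (2*k+2) / a (2*k+3)"
        using ratio[of k] a3 by (simp add: divide_simps mult.commute add.commute)
      show "1 / (a 1 * (2*k+1)) \<le> g k" using Suc.IH by simp
    qed (use a2 a3 P in \<open>auto simp: g_def simp del: cB.simps\<close>)
    also have "\<dots> = (a (2*k+2) * B (2*k+1))^2 / (Pa a (2*k+1) * a (2*k+2) * a (2*k+3))"
      unfolding g_def using a2 a3 P by (simp add: field_simps power2_eq_square del: cB.simps)
    also have "\<dots> \<le> g (Suc k)"
      unfolding g_def Pe using Bge B1 a2 a3 P
      by (intro divide_right_mono power_mono) (auto intro!: mult_nonneg_nonneg)
    finally show ?case by simp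
  qed
  have QH: "Q (2*K) \<ge> b / (2 * a 1) * harm K" for K
  proof (induction K)
    case 0 then show ?case by (simp add: Q_0 harm_def)
  next
    case (Suc K)
    have "Q (2*Suc K) \<ge> Q (2*K+1)" using Q_strict[of "2*K+1"] by simp
    moreover have "Q (2*K+1) = Q (2*K) + b * g K"
      using Q_Suc[of "2*K"] by (simp add: g_def)
    moreover have "b * g K \<ge> b / (a 1 * (2*K+1))"
      using mult_left_mono[OF g_low[of K] less_imp_le[OF b]] by simp
    moreover have "b / (a 1 * (2*K+1)) \<ge> b / (2 * a 1 * real (Suc K))"
    proof (rule frac_le)
      show "0 \<le> b" using b by simp
      show "0 < a 1 * real (2*K+1)" using a1 by simp
      show "a 1 * real (2*K+1) \<le> 2 * a 1 * real (Suc K)" using a1 by (simp add: algebra_simps)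
    qed simp
    moreover have "b / (2 * a 1) * harm (Suc K) = b / (2 * a 1) * harm K + b / (2 * a 1 * real (Suc K))"
      using harm_mult_Suc[of "b / (2 * a 1)" K] by simp
    ultimately show ?case using Suc.IH by linarith
  qed
  have hc: "b / (2 * a 1) > 0" using b a1 by simp
  have Hlim: "filterlim (\<lambda>K. b / (2 * a 1) * harm K) at_top sequentially"
    using filterlim_tendsto_pos_mult_at_top[OF tendsto_const hc harm_at_top] .
  show ?thesis
    unfolding filterlim_at_top
  proof
    fix Z
    from Hlim[unfolded filterlim_at_top] have "eventually (\<lambda>K. b / (2 * a 1) * harm K \<ge> Z) sequentially" by blast
    then obtain K0 where K0: "\<And>K. K \<ge> K0 \<Longrightarrow> b / (2 * a 1) * harm K \<ge> Z"
      by (auto simp: eventually_sequentially)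
    show "eventually (\<lambda>n. Q n \<ge> Z) sequentially"
      unfolding eventually_sequentially
    proof (intro exI allI impI)
      fix n assume "n \<ge> 2*K0"
      then have "n div 2 \<ge> K0" by linarith
      have "Z \<le> b / (2 * a 1) * harm (n div 2)" using K0 \<open>n div 2 \<ge> K0\<close> by blast
      also have "\<dots> \<le> Q (2 * (n div 2))" using QH by blast
      also have "\<dots> \<le> Q n" by (rule Q_mono) simp
      finally show "Q n \<ge> Z" .
    qed
  qed
qed

end



lemma cf_num_pos:
  assumes r: "r > 1/2"
  shows "cf_num r k > 0"
proof -
  have k1: "(2 * real k - 1)^2 \<ge> 1"
  proof (cases k)
    case 0 then show ?thesis by simp
  next
    case (Suc j)
    then have "2 * real k - 1 \<ge> 1" by simp
    then show ?thesis by (metis one_le_power power_one)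
  qed
  have "(2 * real k - 1)^2 * r^2 \<ge> 1 * r^2" by (rule mult_right_mono[OF k1]) simp
  moreover have "r^2 - (r-1)^2 = 2*r - 1" by (simp add: power2_eq_square algebra_simps)
  ultimately show ?thesis unfolding cf_num_def using r by linarith
qed

lemma cf_num_ratio:
  "cf_num r (2*k+3) * (2*k+1) \<le> cf_num r (2*k+2) * (2*k+3)" if r: "r > 1/2"
proof -
  have "cf_num r (2*k+2) * (2*k+3) - cf_num r (2*k+3) * (2*k+1) = 2*(2*r-1)"
    by (simp add: cf_num_def algebra_simps power2_eq_square)
  then show ?thesis using r by simp
qed

lemma cf_num_1: "cf_num r 1 = 2*r - 1"
  by (simp add: cf_num_def power2_eq_square algebra_simps)

lemma cf_conv_num:
  assumes r: "r > 1/2" and s: "s > 0"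
  shows "convergent (cf_convergent (cf_num r) (2 * s))"
    "cfrac (cf_num r) (2 * s) > 0"
    "cf_convergent (cf_num r) (2 * s) \<longlonglongrightarrow> cfrac (cf_num r) (2 * s)"
proof -
  interpret cfpos "cf_num r" "2 * s"
    using s cf_num_pos[OF r] by unfold_locales auto
  have Q: "filterlim (cQ (cf_num r) (2 * s)) at_top sequentially"
    by (rule Q_diverge) (use cf_num_ratio[OF r] in \<open>simp add: algebra_simps\<close>)
  show "convergent (cf_convergent (cf_num r) (2 * s))" "cfrac (cf_num r) (2 * s) > 0"
    using conv_criterion[OF Q] by auto
  show "cf_convergent (cf_num r) (2 * s) \<longlonglongrightarrow> cfrac (cf_num r) (2 * s)"
    using conv_lim[OF Q] .
qed

lemma bm_alg:
  fixes U0 U1 U2 U3 a1 a2 b b' w0 w1 w2 :: real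
  assumes "U3 = b*U2 + a2*U1" "U2 = b*U1 + a1*U0" "a2 = b'*w1 + a1 - b*w0" "w2 = w0 + (b' - b)"
  shows "U3 + w2*U2 = b'*(U2 + w1*U1) + a1*(U1 + w0*U0)"
proof -
  have "a1*(U1 + w0*U0) = a1*U1 + w0*(U2 - b*U1)" using assms(2) by (simp add: algebra_simps)
  have "U3 + w2*U2 = (b + w0 + (b' - b))*U2 + a2*U1" unfolding assms(1,4) by (simp add: algebra_simps)
  also have "\<dots> = b'*U2 + w0*U2 + (b'*w1 + a1 - b*w0)*U1" unfolding assms(3) by (simp add: algebra_simps)
  finally show ?thesis using \<open>a1*(U1 + w0*U0) = a1*U1 + w0*(U2 - b*U1)\<close> by (simp add: algebra_simps)
qed

lemma rec_zero:
  fixes V :: "nat \<Rightarrow> real"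
  assumes "\<And>m. V (Suc (Suc m)) = c * V (Suc m) + d (Suc m) * V m" "V 0 = 0" "V 1 = 0"
  shows "V n = 0"
proof -
  have "V n = 0 \<and> V (Suc n) = 0"
    by (induction n) (use assms in auto)
  then show ?thesis by simp
qed



lemma bm_V:
  fixes U :: "nat \<Rightarrow> real" and r s :: real
  defines "w \<equiv> \<lambda>n::nat. 2*r*real n - s"
  assumes rec: "\<And>j. U (Suc (Suc j)) = (2 * s) * U (Suc j) + cf_num r (Suc j) * U j"
  shows "U (Suc (Suc (Suc m))) + w (Suc (Suc m)) * U (Suc (Suc m))
       = (2 * (s + 2*r)) * (U (Suc (Suc m)) + w (Suc m) * U (Suc m)) + cf_num r (Suc m) * (U (Suc m) + w m * U m)"
proof (rule bm_alg)
  show "U (Suc (Suc (Suc m))) = (2 * s) * U (Suc (Suc m)) + cf_num r (Suc (Suc m)) * U (Suc m)" by (rule rec)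
  show "U (Suc (Suc m)) = (2 * s) * U (Suc m) + cf_num r (Suc m) * U m" by (rule rec)
  show "cf_num r (Suc (Suc m)) = (2 * (s + 2*r)) * w (Suc m) + cf_num r (Suc m) - (2 * s) * w m"
    unfolding w_def cf_num_def by (simp add: algebra_simps power2_eq_square)
  show "w (Suc (Suc m)) = w m + (2 * (s + 2*r) - 2 * s)"
    unfolding w_def by (simp add: algebra_simps)
qed

lemma bm_identity:
  fixes r s :: real
  defines "w \<equiv> \<lambda>n::nat. 2*r*real n - s"
  defines "a \<equiv> cf_num r" and "b \<equiv> 2 * s" and "b' \<equiv> 2 * (s + 2*r)"
  defines "P \<equiv> (s+1)*(s+2*r-1)"
  shows "s * (cB a b (Suc n) + w n * cB a b n) + (cA a b (Suc n) + w n * cA a b n) = P * cB a b' n"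
    and "cB a b (Suc n) + w n * cB a b n = (s + 2*r) * cB a b' n + cA a b' n"
proof -
  define X where "X j = cB a b (Suc j) + w j * cB a b j" for j
  define Y where "Y j = cA a b (Suc j) + w j * cA a b j" for j
  have recB: "\<And>j. cB a b (Suc (Suc j)) = (2 * s) * cB a b (Suc j) + cf_num r (Suc j) * cB a b j"
    by (simp add: a_def b_def)
  have recA: "\<And>j. cA a b (Suc (Suc j)) = (2 * s) * cA a b (Suc j) + cf_num r (Suc j) * cA a b j"
    by (simp add: a_def b_def)
  have X: "X (Suc (Suc m)) = b' * X (Suc m) + a (Suc m) * X m" for m
    using bm_V[OF recB, of m] unfolding X_def w_def a_def b'_def by simp
  have Y: "Y (Suc (Suc m)) = b' * Y (Suc m) + a (Suc m) * Y m" for m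
    using bm_V[OF recA, of m] unfolding Y_def w_def a_def b'_def by simp
  define Z where "Z j = s * X j + Y j - P * cB a b' j" for j
  define W where "W j = X j - (s + 2*r) * cB a b' j - cA a b' j" for j
  have Z0: "Z n = 0"
  proof (rule rec_zero[where c = b' and d = a])
    show "Z (Suc (Suc m)) = b' * Z (Suc m) + a (Suc m) * Z m" for m
      unfolding Z_def using X[of m] Y[of m] by (simp add: algebra_simps)
    show "Z 0 = 0" by (simp add: Z_def X_def Y_def w_def)
    show "Z 1 = 0" using cf_num_1[of r] by (simp add: Z_def X_def Y_def w_def P_def a_def b_def algebra_simps)
  qed
  have W0: "W n = 0"
  proof (rule rec_zero[where c = b' and d = a])
    show "W (Suc (Suc m)) = b' * W (Suc m) + a (Suc m) * W m" for m
      unfolding W_def using X[of m] by (simp add: algebra_simps)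
    show "W 0 = 0" by (simp add: W_def X_def w_def)
    show "W 1 = 0" by (simp add: W_def X_def w_def b_def algebra_simps)
  qed
  show "s * (cB a b (Suc n) + w n * cB a b n) + (cA a b (Suc n) + w n * cA a b n) = P * cB a b' n"
    using Z0 unfolding Z_def X_def Y_def by simp
  show "cB a b (Suc n) + w n * cB a b n = (s + 2*r) * cB a b' n + cA a b' n"
    using W0 unfolding W_def X_def by simp
qed



lemma mediant_bound:
  fixes A1 A2 B1 B2 w L :: real
  assumes B1: "B1 > 0" and B2: "B2 > 0" and w: "w \<ge> 0"
  shows "\<bar>(A1 + w*A2)/(B1 + w*B2) - L\<bar> \<le> \<bar>A1/B1 - L\<bar> + \<bar>A2/B2 - L\<bar>"
proof -
  define x where "x = A1/B1 - L"
  define y where "y = A2/B2 - L"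
  define D where "D = B1 + w*B2"
  have wB2: "w*B2 \<ge> 0" using w B2 by simp
  have D: "D > 0" using B1 wB2 by (simp add: D_def)
  have A1: "A1 = B1*(x+L)" using B1 by (simp add: x_def)
  have A2: "A2 = B2*(y+L)" using B2 by (simp add: y_def)
  have e: "(A1 + w*A2)/(B1 + w*B2) - L = (B1*x + (w*B2)*y) / D"
    using D unfolding D_def A1 A2 by (simp add: field_simps)
  have "\<bar>B1*x + (w*B2)*y\<bar> \<le> B1*\<bar>x\<bar> + (w*B2)*\<bar>y\<bar>"
    using B1 wB2 by (metis abs_mult abs_of_nonneg abs_triangle_ineq less_imp_le)
  also have "\<dots> \<le> D*\<bar>x\<bar> + D*\<bar>y\<bar>"
    using B1 wB2 by (intro add_mono mult_right_mono) (auto simp: D_def)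
  finally have "\<bar>B1*x + (w*B2)*y\<bar> / D \<le> \<bar>x\<bar> + \<bar>y\<bar>"
    using D by (simp add: divide_simps algebra_simps)
  then show ?thesis unfolding e x_def[symmetric] y_def[symmetric] using D by simp
qed

theorem y_fe:
  assumes r: "r > 1/2" and s: "s > 0"
  shows "y_cf s r * y_cf (s + 2*r) r = (s + 1) * (s + 2*r - 1)"
proof -
  define a where "a = cf_num r"
  define b where "b = 2 * s"
  define b' where "b' = 2 * (s + 2*r)"
  define w where "w = (\<lambda>n::nat. 2*r*real n - s)"
  define P where "P = (s+1)*(s+2*r-1)"
  define L where "L = cfrac a b"
  define L' where "L' = cfrac a b'"
  have r0: "r > 0" using r by simp
  have s': "s + 2*r > 0" using s r by simp
  have apos: "a k > 0" for k using cf_num_pos[OF r] by (simp add: a_def)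
  have bpos: "b > 0" and b'pos: "b' > 0" using s s' by (simp_all add: b_def b'_def)
  have fL: "cf_convergent a b \<longlonglongrightarrow> L" and L0: "L > 0"
    using cf_conv_num[OF r s] by (simp_all add: a_def b_def L_def)
  have fL': "cf_convergent a b' \<longlonglongrightarrow> L'" and L'0: "L' > 0"
    using cf_conv_num[OF r s'] by (simp_all add: a_def b'_def L'_def)
  define X where "X m = cB a b (Suc (Suc m)) + w (Suc m) * cB a b (Suc m)" for m
  define Y where "Y m = cA a b (Suc (Suc m)) + w (Suc m) * cA a b (Suc m)" for m
  have eqR: "s + Y m / X m = P / (s + 2*r + cf_convergent a b' m)" for m
  proof -
    have i1: "s * X m + Y m = P * cB a b' (Suc m)"
      using bm_identity(1)[where r=r and s=s and n="Suc m"] by (simp add: X_def Y_def a_def b_def b'_def w_def P_def)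
    have i2: "X m = (s + 2*r) * cB a b' (Suc m) + cA a b' (Suc m)"
      using bm_identity(2)[where r=r and s=s and n="Suc m"] by (simp add: X_def a_def b_def b'_def w_def)
    have Bp: "cB a b' (Suc m) > 0" using cB_pos[where a=a and b=b', OF b'pos apos] by blast
    have An: "cA a b' (Suc m) \<ge> 0" using cA_nonneg[where a=a and b=b', OF b'pos apos] by blast
    have Xp: "X m > 0" using i2 Bp An s' by (simp add: add_pos_nonneg)
    have "s + Y m / X m = (s * X m + Y m) / X m" using Xp by (simp add: field_simps)
    also have "\<dots> = P * cB a b' (Suc m) / ((s + 2*r) * cB a b' (Suc m) + cA a b' (Suc m))"
      using i1 i2 by simp
    also have "\<dots> = P / (s + 2*r + cA a b' (Suc m) / cB a b' (Suc m))"
      using Bp by (simp add: field_simps)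
    also have "\<dots> = P / (s + 2*r + cf_convergent a b' m)"
      using cf_convergent_AB[where a=a and b=b', OF b'pos apos] by simp
    finally show ?thesis .
  qed
  have limR: "(\<lambda>m. P / (s + 2*r + cf_convergent a b' m)) \<longlonglongrightarrow> P / (s + 2*r + L')"
    using s' L'0 by (intro tendsto_intros fL') auto
  obtain N :: nat where N: "s / (2*r) < real N" using reals_Archimedean2 by blast
  have evw: "eventually (\<lambda>m. w (Suc m) \<ge> 0) sequentially"
    unfolding eventually_sequentially
  proof (intro exI allI impI)
    fix m assume "m \<ge> N"
    then have "s / (2*r) < real (Suc m)" using N by simp
    then have "s < 2*r*real (Suc m)" using r0 by (simp add: field_simps)
    then show "w (Suc m) \<ge> 0" by (simp add: w_def)
  qed
  have g0: "(\<lambda>m. \<bar>cf_convergent a b (Suc m) - L\<bar> + \<bar>cf_convergent a b m - L\<bar>) \<longlonglongrightarrow> 0"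
  proof -
    have "(\<lambda>m. cf_convergent a b m - L) \<longlonglongrightarrow> 0" using fL by (rule LIM_zero)
    then have h: "(\<lambda>m. \<bar>cf_convergent a b m - L\<bar>) \<longlonglongrightarrow> 0" by (rule tendsto_rabs_zero)
    have "(\<lambda>m. \<bar>cf_convergent a b (Suc m) - L\<bar>) \<longlonglongrightarrow> 0" using LIMSEQ_Suc[OF h] .
    from tendsto_add[OF this h] show ?thesis by simp
  qed
  have "(\<lambda>m. Y m / X m - L) \<longlonglongrightarrow> 0"
  proof (rule Lim_null_comparison[OF _ g0])
    show "eventually (\<lambda>m. norm (Y m / X m - L) \<le> \<bar>cf_convergent a b (Suc m) - L\<bar> + \<bar>cf_convergent a b m - L\<bar>) sequentially"
      using evw
    proof eventually_elim
      case (elim m)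
      have B1: "cB a b (Suc (Suc m)) > 0" and B2: "cB a b (Suc m) > 0"
        using cB_pos[where a=a and b=b, OF bpos apos] by blast+
      show ?case
        using mediant_bound[OF B1 B2 elim, of "cA a b (Suc (Suc m))" "cA a b (Suc m)" L]
        by (simp add: X_def Y_def cf_convergent_AB[where a=a and b=b, OF bpos apos])
    qed
  qed
  then have "(\<lambda>m. s + Y m / X m) \<longlonglongrightarrow> s + L"
    by (simp add: LIM_zero_iff tendsto_add[OF tendsto_const])
  then have "(\<lambda>m. P / (s + 2*r + cf_convergent a b' m)) \<longlonglongrightarrow> s + L" using eqR by simp
  then have "s + L = P / (s + 2*r + L')" using limR LIMSEQ_unique by blast
  moreover have "y_cf s r = s + L" "y_cf (s + 2*r) r = s + 2*r + L'"
    by (simp_all add: y_cf_def L_def L'_def a_def b_def b'_def)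
  moreover have "s + 2*r + L' > 0" using s' L'0 by simp
  ultimately show ?thesis by (simp add: P_def)
qed



lemma lg_plus1: "x > 0 \<Longrightarrow> ln_Gamma (x + 1) = ln x + ln_Gamma (x::real)"
proof -
  assume x: "x > 0"
  have nz: "x \<notin> \<int>\<^sub>\<le>\<^sub>0" using x by (auto elim!: nonpos_Ints_cases)
  have "ln_Gamma (x+1) = ln (Gamma (x+1))" using x by (simp add: ln_Gamma_real_pos)
  also have "Gamma (x+1) = x * Gamma x" using Gamma_plus1[OF nz] .
  also have "ln (x * Gamma x) = ln x + ln (Gamma x)" 
  proof -
    have gx: "Gamma x \<noteq> 0" using Gamma_real_pos[OF x] by linarith
    have xx: "x \<noteq> 0" using x by simp
    show ?thesis using xx gx by (simp add: ln_mult)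
  qed
  finally show ?thesis using x by (simp add: ln_Gamma_real_pos)
qed

lemma lg_mid: "x > 0 \<Longrightarrow> y > 0 \<Longrightarrow> 2 * ln_Gamma ((x + y)/2) \<le> ln_Gamma x + ln_Gamma (y::real)"
proof -
  assume x: "x > 0" and y: "y > 0"
  define m where "m = (x+y)/2"
  have m: "m > 0" using x y by (simp add: m_def)
  have e: "(1 - 1/2) *\<^sub>R x + (1/2) *\<^sub>R y = m" by (simp add: m_def field_simps)
  have "(ln \<circ> Gamma) ((1 - 1/2) *\<^sub>R x + (1/2) *\<^sub>R y) \<le> (1 - 1/2) * (ln \<circ> Gamma) x + (1/2) * (ln \<circ> Gamma) y"
    by (rule convex_onD[OF log_convex_Gamma_real]) (use x y in auto)
  then have "ln (Gamma m) \<le> (1/2) * ln (Gamma x) + (1/2) * ln (Gamma y)" unfolding e by simp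
  then have "2 * ln_Gamma m \<le> ln_Gamma x + ln_Gamma y" using x y m by (simp add: ln_Gamma_real_pos)
  then show ?thesis by (simp add: m_def)
qed

definition Dg :: "real \<Rightarrow> real" where "Dg x = ln_Gamma (x + 1/2) - ln_Gamma x"

lemma Dg_upper: "x > 0 \<Longrightarrow> 2 * Dg x \<le> ln x"
proof -
  assume x: "x > 0"
  have e: "(x + (x+1))/2 = x + 1/2" by simp
  have "2 * ln_Gamma ((x + (x+1))/2) \<le> ln_Gamma x + ln_Gamma (x+1)" using lg_mid[of x "x+1"] x by simp
  then have "2 * ln_Gamma (x + 1/2) \<le> ln_Gamma x + ln_Gamma (x+1)" by (simp only: e)
  then show ?thesis using lg_plus1[OF x] unfolding Dg_def right_diff_distrib by linarith
qed

lemma Dg_lower: "x > 0 \<Longrightarrow> 2 * Dg x \<ge> 2 * ln x - ln (x + 1/2)"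
proof -
  assume x: "x > 0"
  have x2: "x + 1/2 > 0" using x by simp
  have e: "((x+1/2) + (x+1/2+1))/2 = x + 1" by simp
  have "2 * ln_Gamma (((x+1/2) + (x+1/2+1))/2) \<le> ln_Gamma (x+1/2) + ln_Gamma (x+1/2+1)"
    using lg_mid[of "x+1/2" "x+1/2+1"] x by simp
  then have "2 * ln_Gamma (x + 1) \<le> ln_Gamma (x+1/2) + ln_Gamma (x+1/2+1)" by (simp only: e)
  then show ?thesis using lg_plus1[OF x] lg_plus1[OF x2] unfolding Dg_def right_diff_distrib by linarith
qed

definition Hf :: "real \<Rightarrow> real \<Rightarrow> real" where
  "Hf r s = ln (4*r) + Dg ((s+1)/(4*r)) + Dg ((s+2*r-1)/(4*r))"

definition Hd :: "real \<Rightarrow> real \<Rightarrow> real" where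
  "Hd r s = (Digamma ((s+1)/(4*r) + 1/2) - Digamma ((s+1)/(4*r))
             + Digamma ((s+2*r-1)/(4*r) + 1/2) - Digamma ((s+2*r-1)/(4*r))) / (4*r)"

context
  fixes r :: real assumes r: "r > 1/2"
begin

lemma r0: "r > 0" using r by simp

lemma ab_pos: "s > 0 \<Longrightarrow> (s+1)/(4*r) > 0 \<and> (s+2*r-1)/(4*r) > 0"
  using r by simp

lemma Hf_fe: "s > 0 \<Longrightarrow> Hf r s + Hf r (s + 2*r) = ln (s+1) + ln (s+2*r-1)"
proof -
  assume s: "s > 0"
  define al where "al = (s+1)/(4*r)"
  define be where "be = (s+2*r-1)/(4*r)"
  have al: "al > 0" and be: "be > 0" using ab_pos[OF s] by (simp_all add: al_def be_def)
  have e1: "(s + 2*r + 1)/(4*r) = al + 1/2" using r0 by (simp add: al_def field_simps)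
  have e2: "(s + 2*r + 2*r - 1)/(4*r) = be + 1/2" using r0 by (simp add: be_def field_simps)
  have e3: "al + 1/2 + 1/2 = al + 1" "be + 1/2 + 1/2 = be + 1" by simp_all
  have "Hf r s + Hf r (s + 2*r) = 2 * ln (4*r) + ln al + ln be"
    unfolding Hf_def Dg_def al_def[symmetric] be_def[symmetric] e1 e2 e3
      lg_plus1[OF al] lg_plus1[OF be] by simp
  also have "ln al = ln (s+1) - ln (4*r)" using s r0 by (simp add: al_def ln_div)
  also have "ln be = ln (s+2*r-1) - ln (4*r)" using s r r0 by (simp add: be_def ln_div)
  finally show ?thesis by simp
qed

lemma Hf_upper: "s > 0 \<Longrightarrow> 2 * Hf r s \<le> ln (s+1) + ln (s+2*r-1)"
proof -
  assume s: "s > 0"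
  define al where "al = (s+1)/(4*r)"
  define be where "be = (s+2*r-1)/(4*r)"
  have al: "al > 0" and be: "be > 0" using ab_pos[OF s] by (simp_all add: al_def be_def)
  have "2 * Hf r s \<le> 2 * ln (4*r) + ln al + ln be"
    using Dg_upper[OF al] Dg_upper[OF be] unfolding Hf_def al_def[symmetric] be_def[symmetric] by simp
  also have "ln al = ln (s+1) - ln (4*r)" using s r0 by (simp add: al_def ln_div)
  also have "ln be = ln (s+2*r-1) - ln (4*r)" using s r r0 by (simp add: be_def ln_div)
  finally show ?thesis by simp
qed

lemma Hf_lower: "s > 0 \<Longrightarrow> 2 * Hf r s \<ge> 2 * ln (s+1) + 2 * ln (s+2*r-1) - ln (s+2*r+1) - ln (s+4*r-1)"
proof -
  assume s: "s > 0"
  define al where "al = (s+1)/(4*r)"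
  define be where "be = (s+2*r-1)/(4*r)"
  have al: "al > 0" and be: "be > 0" using ab_pos[OF s] by (simp_all add: al_def be_def)
  have "2 * Hf r s \<ge> 2 * ln (4*r) + (2 * ln al - ln (al + 1/2)) + (2 * ln be - ln (be + 1/2))"
    using Dg_lower[OF al] Dg_lower[OF be] unfolding Hf_def al_def[symmetric] be_def[symmetric] by simp
  moreover have "ln al = ln (s+1) - ln (4*r)" using s r0 by (simp add: al_def ln_div)
  moreover have "ln be = ln (s+2*r-1) - ln (4*r)" using s r r0 by (simp add: be_def ln_div)
  moreover have "ln (al + 1/2) = ln (s+2*r+1) - ln (4*r)"
  proof -
    have "al + 1/2 = (s+2*r+1)/(4*r)" using r0 by (simp add: al_def field_simps)
    then show ?thesis using s r0 by (simp add: ln_div)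
  qed
  moreover have "ln (be + 1/2) = ln (s+4*r-1) - ln (4*r)"
  proof -
    have "be + 1/2 = (s+4*r-1)/(4*r)" using r0 by (simp add: be_def field_simps)
    then show ?thesis using s r r0 by (simp add: ln_div)
  qed
  ultimately show ?thesis by simp
qed

lemma Hf_deriv: "s > 0 \<Longrightarrow> (Hf r has_real_derivative Hd r s) (at s)"
proof -
  assume s: "s > 0"
  have al: "(s+1)/(4*r) > 0" and be: "(s+2*r-1)/(4*r) > 0" using ab_pos[OF s] by auto
  have al2: "(s+1)/(4*r) + 1/2 > 0" and be2: "(s+2*r-1)/(4*r) + 1/2 > 0" using al be by auto
  show ?thesis
    unfolding Hf_def Dg_def Hd_def
    using al be al2 be2 r0
    by (auto intro!: derivative_eq_intros simp: field_simps)
qed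

lemma Hd_fe: "s > 0 \<Longrightarrow> Hd r s + Hd r (s + 2*r) = 1/(s+1) + 1/(s+2*r-1)"
proof -
  assume s: "s > 0"
  define al where "al = (s+1)/(4*r)"
  define be where "be = (s+2*r-1)/(4*r)"
  have al: "al > 0" and be: "be > 0" using ab_pos[OF s] by (simp_all add: al_def be_def)
  have e1: "(s + 2*r + 1)/(4*r) = al + 1/2" using r0 by (simp add: al_def field_simps)
  have e2: "(s + 2*r + 2*r - 1)/(4*r) = be + 1/2" using r0 by (simp add: be_def field_simps)
  have e3: "al + 1/2 + 1/2 = al + 1" "be + 1/2 + 1/2 = be + 1" by simp_all
  define p1 where "p1 = Digamma al"
  define p2 where "p2 = Digamma (al + 1/2)"
  define p3 where "p3 = Digamma (al + 1)"
  define q1 where "q1 = Digamma be"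
  define q2 where "q2 = Digamma (be + 1/2)"
  define q3 where "q3 = Digamma (be + 1)"
  have p3: "p3 = p1 + 1/al" unfolding p3_def p1_def using Digamma_plus1[of al] al by simp
  have q3: "q3 = q1 + 1/be" unfolding q3_def q1_def using Digamma_plus1[of be] be by simp
  have "Hd r s + Hd r (s + 2*r) = (p2 - p1 + q2 - q1) / (4*r) + (p3 - p2 + q3 - q2) / (4*r)"
    unfolding Hd_def al_def[symmetric] be_def[symmetric] e1 e2 e3 p1_def p2_def p3_def q1_def q2_def q3_def
    by simp
  also have "\<dots> = (1/al + 1/be) / (4*r)"
    unfolding p3 q3 using r0 by (simp add: field_simps)
  also have "\<dots> = 1/(al*(4*r)) + 1/(be*(4*r))" using al be r0 by (simp add: field_simps)
  also have "\<dots> = 1/(s+1) + 1/(s+2*r-1)" using r0 by (simp add: al_def be_def)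
  finally show ?thesis .
qed

lemma Hd_nonneg: "s > 0 \<Longrightarrow> Hd r s \<ge> 0"
proof -
  assume s: "s > 0"
  have al: "(s+1)/(4*r) > 0" and be: "(s+2*r-1)/(4*r) > 0" using ab_pos[OF s] by auto
  have "Digamma ((s+1)/(4*r)) \<le> Digamma ((s+1)/(4*r) + 1/2)" by (rule Digamma_real_mono) (use al in auto)
  moreover have "Digamma ((s+2*r-1)/(4*r)) \<le> Digamma ((s+2*r-1)/(4*r) + 1/2)" by (rule Digamma_real_mono) (use be in auto)
  ultimately show ?thesis unfolding Hd_def using r0 by (intro divide_nonneg_pos) auto
qed

end



lemma shift_at_top: "filterlim (\<lambda>t::real. t + c) at_top at_top"
  by (rule filterlim_tendsto_add_at_top[OF tendsto_const filterlim_ident, simplified add.commute])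

lemma inv_shift0: "((\<lambda>t::real. 1 / (t + c)) \<longlongrightarrow> 0) at_top"
  using tendsto_inverse_0_at_top[OF shift_at_top[of c]] by (simp add: inverse_eq_divide)

lemma ln_shift: "((\<lambda>t::real. ln (t + c) - ln t) \<longlongrightarrow> 0) at_top"
proof -
  have "((\<lambda>t. 1 + c * (1 / (t + 0))) \<longlongrightarrow> 1 + c * 0) at_top"
    by (intro tendsto_intros inv_shift0)
  then have "((\<lambda>t. ln (1 + c * (1 / t))) \<longlongrightarrow> ln 1) at_top"
    by (intro tendsto_ln) auto
  then have h: "((\<lambda>t. ln (1 + c * (1 / t))) \<longlongrightarrow> 0) at_top" by simp
  have ev: "eventually (\<lambda>t. ln (1 + c * (1 / t)) = ln (t + c) - ln t) at_top"
    using eventually_gt_at_top[of "\<bar>c\<bar>"]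
  proof eventually_elim
    case (elim t)
    then have t: "t > 0" and tc: "t + c > 0" by auto
    have "1 + c * (1/t) = (t + c) / t" using t by (simp add: field_simps)
    then show ?case using t tc by (simp add: ln_div)
  qed
  show ?thesis using Lim_transform_eventually[OF h ev] .
qed

lemma y_basic:
  assumes r: "r > 1/2" and s: "s > 0"
  shows "y_cf s r > s"
  using cf_conv_num(2)[OF r s] by (simp add: y_cf_def)

lemma ln_y_fe:
  assumes r: "r > 1/2" and s: "s > 0"
  shows "ln (y_cf s r) + ln (y_cf (s + 2*r) r) = ln (s+1) + ln (s+2*r-1)"
proof -
  have s2: "s + 2*r > 0" using s r by simp
  have y1: "y_cf s r > 0" using y_basic[OF r s] s by simp
  have y2: "y_cf (s+2*r) r > 0" using y_basic[OF r s2] s2 by simp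
  have "ln (y_cf s r * y_cf (s + 2*r) r) = ln ((s + 1) * (s + 2*r - 1))" using y_fe[OF r s] by simp
  then show ?thesis using y1 y2 s r by (simp add: ln_mult)
qed

lemma ln_y_eq:
  assumes r: "r > 1/2" and s: "s > 0"
  shows "ln (y_cf s r) = Hf r s"
proof -
  have r0: "r > 0" using r by simp
  define \<phi> where "\<phi> t = ln (y_cf t r) - Hf r t" for t
  have fe: "\<phi> t + \<phi> (t + 2*r) = 0" if t: "t > 0" for t
    using ln_y_fe[OF r t] Hf_fe[OF r t] by (simp add: \<phi>_def)
  have per: "\<phi> (t + 4*r) = \<phi> t" if t: "t > 0" for t
  proof -
    have t2: "t + 2*r > 0" using t r0 by simp
    have "\<phi> (t + 2*r) + \<phi> (t + 2*r + 2*r) = 0" by (rule fe[OF t2])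
    moreover have "t + 2*r + 2*r = t + 4*r" by simp
    ultimately show ?thesis using fe[OF t] by simp
  qed
  have perk: "\<phi> (s + 4*r*real k) = \<phi> s" for k
  proof (induction k)
    case 0 then show ?case by simp
  next
    case (Suc k)
    have t: "s + 4*r*real k > 0" using s r0 by (simp add: add_pos_nonneg)
    have "\<phi> (s + 4*r*real (Suc k)) = \<phi> (s + 4*r*real k + 4*r)" by (simp add: algebra_simps)
    also have "\<dots> = \<phi> (s + 4*r*real k)" by (rule per[OF t])
    finally show ?case using Suc by simp
  qed
  define U where "U t = (ln (t+2*r+1) - ln t) + (ln (t+4*r-1) - ln t) - 2 * (ln (t+2*r) - ln t)" for t
  define Lo where "Lo t = - (ln (t+1) - ln t) - (ln (t+2*r-1) - ln t)" for t
  have Ulim: "(U \<longlongrightarrow> 0) at_top"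
  proof -
    have "(U \<longlongrightarrow> 0 + 0 - 2 * 0) at_top"
      unfolding U_def[abs_def]
    proof (intro tendsto_intros)
      show "((\<lambda>t. ln (t+2*r+1) - ln t) \<longlongrightarrow> 0) at_top"
        using ln_shift[of "2*r+1"] by (simp only: add.assoc[symmetric] add_diff_eq)
      show "((\<lambda>t. ln (t+4*r-1) - ln t) \<longlongrightarrow> 0) at_top"
        using ln_shift[of "4*r-1"] by (simp only: add.assoc[symmetric] add_diff_eq)
      show "((\<lambda>t. ln (t+2*r) - ln t) \<longlongrightarrow> 0) at_top"
        using ln_shift[of "2*r"] .
    qed
    then show ?thesis by simp
  qed
  have Llim: "(Lo \<longlongrightarrow> 0) at_top"
  proof -
    have "(Lo \<longlongrightarrow> - 0 - 0) at_top"
      unfolding Lo_def[abs_def]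
    proof (intro tendsto_intros)
      show "((\<lambda>t::real. ln (t+1) - ln t) \<longlongrightarrow> 0) at_top"
        using ln_shift[of "1"] .
      show "((\<lambda>t. ln (t+2*r-1) - ln t) \<longlongrightarrow> 0) at_top"
        using ln_shift[of "2*r-1"] by (simp only: add.assoc[symmetric] add_diff_eq)
    qed
    then show ?thesis by simp
  qed
  have bnd: "Lo t \<le> 2 * \<phi> s \<and> 2 * \<phi> s \<le> U t" if t: "t > 0" and pt: "\<phi> t = \<phi> s" for t
  proof -
    have t2: "t + 2*r > 0" using t r0 by simp
    have y1: "y_cf t r > t" using y_basic[OF r t] .
    have y2: "y_cf (t+2*r) r > t + 2*r" using y_basic[OF r t2] .
    have l1: "ln (y_cf t r) > ln t" using y1 t by simp
    have l2: "ln (y_cf (t+2*r) r) > ln (t + 2*r)" using y2 t2 by simp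
    have fe': "ln (y_cf t r) + ln (y_cf (t + 2*r) r) = ln (t+1) + ln (t+2*r-1)" by (rule ln_y_fe[OF r t])
    have hu: "2 * Hf r t \<le> ln (t+1) + ln (t+2*r-1)" by (rule Hf_upper[OF r t])
    have hl: "2 * Hf r t \<ge> 2 * ln (t+1) + 2 * ln (t+2*r-1) - ln (t+2*r+1) - ln (t+4*r-1)" by (rule Hf_lower[OF r t])
    have "Lo t \<le> 2 * \<phi> t" using l1 hu unfolding Lo_def \<phi>_def right_diff_distrib by linarith
    moreover have "2 * \<phi> t \<le> U t" using l2 fe' hl unfolding U_def \<phi>_def right_diff_distrib by linarith
    ultimately show ?thesis using pt by simp
  qed
  have seq: "filterlim (\<lambda>k. s + 4*r*real k) at_top sequentially"
    by (rule filterlim_tendsto_add_at_top[OF tendsto_const])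
       (rule filterlim_tendsto_pos_mult_at_top[OF tendsto_const _ filterlim_real_sequentially], use r0 in simp)
  have U': "(\<lambda>k. U (s + 4*r*real k)) \<longlonglongrightarrow> 0" using filterlim_compose[OF Ulim seq] by (simp add: o_def)
  have L': "(\<lambda>k. Lo (s + 4*r*real k)) \<longlonglongrightarrow> 0" using filterlim_compose[OF Llim seq] by (simp add: o_def)
  have tk: "s + 4*r*real k > 0" for k using s r0 by (simp add: add_pos_nonneg)
  have "2 * \<phi> s \<le> 0"
    by (rule LIMSEQ_le_const[OF U']) (use bnd[OF tk perk] in auto)
  moreover have "0 \<le> 2 * \<phi> s"
    by (rule LIMSEQ_le_const2[OF L']) (use bnd[OF tk perk] in auto)
  ultimately show ?thesis by (simp add: \<phi>_def)
qed



theorem lemma2: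
  fixes r :: real
  assumes r: "r > 1/2"
  shows "(\<forall>s>0. convergent (cf_convergent (cf_num r) (2 * s)))
    \<and> (\<forall>s>0. y_cf s r > 0)
    \<and> continuous_on {0<..} (\<lambda>s. y_cf s r)
    \<and> (\<forall>s>0. y_cf s r > s)
    \<and> (\<forall>s>0. y_cf s r * y_cf (s + 2*r) r = (s + 1) * (s + 2*r - 1))
    \<and> (\<forall>s>0. (\<lambda>t. ln (y_cf t r)) differentiable (at s))
    \<and> (\<forall>s>0. deriv (\<lambda>t. ln (y_cf t r)) s + deriv (\<lambda>t. ln (y_cf t r)) (s + 2*r)
               = 1/(s+1) + 1/(s + 2*r - 1))
    \<and> ((\<lambda>s. deriv (\<lambda>t. ln (y_cf t r)) s) \<longlongrightarrow> 0) at_top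
    \<and> (\<forall>f :: real \<Rightarrow> real.
          (\<forall>s>0. f s + f (s + 2*r) = 1/(s+1) + 1/(s + 2*r - 1))
          \<and> (f \<longlongrightarrow> 0) at_top
          \<longrightarrow> (\<forall>s>0. f s = deriv (\<lambda>t. ln (y_cf t r)) s))"
proof -
  have r0: "r > 0" using r by simp
  have ygt: "y_cf s r > s" if "s > 0" for s using y_basic[OF r that] .
  have eqS: "\<And>x. x \<in> {0<..} \<Longrightarrow> Hf r x = ln (y_cf x r)" using ln_y_eq[OF r] by simp
  have dln: "((\<lambda>t. ln (y_cf t r)) has_real_derivative Hd r s) (at s)" if s: "s > 0" for s
    by (rule has_field_derivative_transform_within_open[OF Hf_deriv[OF r s] open_greaterThan _ eqS])
       (use s in simp)
  have der: "deriv (\<lambda>t. ln (y_cf t r)) s = Hd r s" if s: "s > 0" for s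
    by (rule DERIV_imp_deriv[OF dln[OF s]])
  have dy: "((\<lambda>t. y_cf t r) has_real_derivative exp (Hf r s) * Hd r s) (at s)" if s: "s > 0" for s
  proof (rule has_field_derivative_transform_within_open[of "\<lambda>t. exp (Hf r t)" _ s "{0<..}"])
    show "((\<lambda>t. exp (Hf r t)) has_real_derivative exp (Hf r s) * Hd r s) (at s)"
      by (rule DERIV_chain2[OF DERIV_exp Hf_deriv[OF r s]])
    show "exp (Hf r x) = y_cf x r" if "x \<in> {0<..}" for x
      using eqS[OF that] ygt[of x] that by simp
  qed (use s in auto)
  have c1: "\<forall>s>0. convergent (cf_convergent (cf_num r) (2 * s))"
    using cf_conv_num(1)[OF r] by blast
  have c2: "\<forall>s>0. y_cf s r > 0" using ygt by (meson less_trans)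
  have c3: "continuous_on {0<..} (\<lambda>s. y_cf s r)"
    by (rule continuous_at_imp_continuous_on) (use dy DERIV_isCont in auto)
  have c5: "\<forall>s>0. y_cf s r * y_cf (s + 2*r) r = (s + 1) * (s + 2*r - 1)"
    using y_fe[OF r] by blast
  have c6: "\<forall>s>0. (\<lambda>t. ln (y_cf t r)) differentiable (at s)"
    using dln by (auto simp: real_differentiable_def)
  have c7: "deriv (\<lambda>t. ln (y_cf t r)) s + deriv (\<lambda>t. ln (y_cf t r)) (s + 2*r)
               = 1/(s+1) + 1/(s + 2*r - 1)" if s: "s > 0" for s
  proof -
    have s2: "s + 2*r > 0" using s r0 by simp
    show ?thesis using der[OF s] der[OF s2] Hd_fe[OF r s] by simp
  qed
  have glim: "((\<lambda>s::real. 1/(s+1) + 1/(s + 2*r - 1)) \<longlongrightarrow> 0) at_top"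
  proof -
    have "((\<lambda>s::real. 1/(s+1) + 1/(s + (2*r - 1))) \<longlongrightarrow> 0 + 0) at_top"
      by (intro tendsto_add inv_shift0)
    then show ?thesis by (simp add: add_diff_eq)
  qed
  have c8: "((\<lambda>s. deriv (\<lambda>t. ln (y_cf t r)) s) \<longlongrightarrow> 0) at_top"
  proof (rule tendsto_sandwich[OF _ _ tendsto_const glim])
    show "eventually (\<lambda>s. 0 \<le> deriv (\<lambda>t. ln (y_cf t r)) s) at_top"
      using eventually_gt_at_top[of 0] by eventually_elim (use der Hd_nonneg[OF r] in auto)
    show "eventually (\<lambda>s. deriv (\<lambda>t. ln (y_cf t r)) s \<le> 1/(s+1) + 1/(s + 2*r - 1)) at_top"
      using eventually_gt_at_top[of 0]
    proof eventually_elim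
      case (elim s)
      have s2: "s + 2*r > 0" using elim r0 by simp
      show ?case using c7[OF elim] der[OF s2] Hd_nonneg[OF r s2] by simp
    qed
  qed
  have c9: "\<forall>f :: real \<Rightarrow> real.
          (\<forall>s>0. f s + f (s + 2*r) = 1/(s+1) + 1/(s + 2*r - 1))
          \<and> (f \<longlongrightarrow> 0) at_top
          \<longrightarrow> (\<forall>s>0. f s = deriv (\<lambda>t. ln (y_cf t r)) s)"
  proof (intro allI impI)
    fix f :: "real \<Rightarrow> real" and s :: real
    assume H: "(\<forall>s>0. f s + f (s + 2*r) = 1/(s+1) + 1/(s + 2*r - 1)) \<and> (f \<longlongrightarrow> 0) at_top"
    assume s: "s > 0"
    define g where "g = (\<lambda>s. deriv (\<lambda>t. ln (y_cf t r)) s)"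
    define h where "h t = f t - g t" for t
    have hfe: "h (t + 2*r) = - h t" if t: "t > 0" for t
      using H c7[OF t] t by (simp add: h_def g_def algebra_simps)
    have hk: "\<bar>h (s + 2*r*real k)\<bar> = \<bar>h s\<bar>" for k
    proof (induction k)
      case 0 then show ?case by simp
    next
      case (Suc k)
      have t: "s + 2*r*real k > 0" using s r0 by (simp add: add_pos_nonneg)
      have e: "s + 2*r*real (Suc k) = s + 2*r*real k + 2*r" by (simp add: algebra_simps)
      show ?case unfolding e using hfe[OF t] Suc.IH by simp
    qed
    have hlim: "(h \<longlongrightarrow> 0) at_top"
      using tendsto_diff[OF conjunct2[OF H] c8] by (simp add: h_def[abs_def] g_def)
    have seq: "filterlim (\<lambda>k. s + 2*r*real k) at_top sequentially"
      by (rule filterlim_tendsto_add_at_top[OF tendsto_const])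
         (rule filterlim_tendsto_pos_mult_at_top[OF tendsto_const _ filterlim_real_sequentially], use r0 in simp)
    have "(\<lambda>k. h (s + 2*r*real k)) \<longlonglongrightarrow> 0" using filterlim_compose[OF hlim seq] by (simp add: o_def)
    then have "(\<lambda>k. \<bar>h (s + 2*r*real k)\<bar>) \<longlonglongrightarrow> 0" by (rule tendsto_rabs_zero)
    then have "(\<lambda>k. \<bar>h s\<bar>) \<longlonglongrightarrow> 0" using hk by simp
    then have "\<bar>h s\<bar> = 0" using LIMSEQ_const_iff by blast
    then show "f s = deriv (\<lambda>t. ln (y_cf t r)) s" by (simp add: h_def g_def)
  qed
  show ?thesis using c1 c2 c3 ygt c5 c6 c7 c8 c9 by blast
qed


end
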